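(* Let $k\in\omega\setminus\{0,1\}$, let $\psi$ be a bounded complexity measure and let $T\in\mathcal M_k^\infty\setminus\mathcal M_k^{\infty c}$. Then $\psi^a(T)=\max\{M_\psi(T,\bar\delta):\bar\delta\in\Delta(T)\}$.
   Context: Notation: $\omega=\{0,1,2,\dots\}$; $\mathcal P(\omega)$ is the set of nonempty finite subsets of $\omega$; for $k\in\omega\setminus\{0,1\}$, $E_k=\{0,1,\dots,k-1\}$. $P=\{f_i:i\in\omega\}$ is a set of attributes, $f_i\neq f_j$ for $i\ne j$. Decision tables: $\mathcal M_k^\infty$ is the set of rectangular tables filled with numbers from $E_k$, whose columns are labeled with pairwise different attributes from $P$, whose rows are pairwise different, and each row of which is labeled with a set from $\mathcal P(\omega)$ (its set of decisions). The empty table (no rows) is denoted $\Lambda$ and belongs to $\mathcal M_k^\infty$. For $T\in\mathcal M_k^\infty$: $\Delta(T)$ is the set of rows; $\Pi(T)$ is the intersection of the decision sets of all rows (common decisions); $\mathcal M_k^{\infty c}$ is the set of tables having at least one common decision, and $\Lambda\in\mathcal M_k^{\infty c}$; $\mathrm{At}(T)$ is the set of attributes labeling columns. For nonempty $T$ and a word $\alpha=(f_{i_1},\delta_1)\cdots(f_{i_m},\delta_m)$ with $f_{i_j}\in\mathrm{At}(T)$, $\delta_j\in E_k$, $T\alpha$ is the subtable of $T$ consisting of the rows having value $\delta_j$ in the column $f_{i_j}$ for all $j$; for the empty word $\lambda$, $T\lambda=T$. Decision trees: a $k$-decision tree is a finite directed rooted tree with at least two nodes in which the root and the edges leaving the root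 are unlabeled, each terminal node is labeled with a decision from $\omega$, and each other node is labeled with an attribute from $P$, each edge leaving such a node being labeled with a number from $E_k$. $\mathrm{At}(\Gamma)$ is the set of attributes labeling nodes of $\Gamma$. For a complete path $\tau=v_1,d_1,\dots,v_m,d_m,v_{m+1}$ (from the root to a terminal node), $\pi(\tau)=\lambda$ if $m=1$, and otherwise $\pi(\tau)=(f_{i_2},\delta_2)\cdots(f_{i_m},\delta_m)$ where $v_j$ is labeled $f_{i_j}$ and $d_j$ is labeled $\delta_j$; $T(\tau)=T\pi(\tau)$. For $T\ne\Lambda$, a nondeterministic decision tree for $T$ is a $k$-decision tree $\Gamma$ with $\mathrm{At}(\Gamma)\subseteq\mathrm{At}(T)$ such that every row of $T$ belongs to $T(\tau)$ for some complete path $\tau$, and for every complete path $\tau$ either $T(\tau)=\Lambda$ or the decision at the terminal node of $\tau$ belongs to $\Pi(T(\tau))$. Complexity measures: a partially bounded complexity measure is a function $\psi:P^*\to\omega$ on finite words over $P$ such that for all words $\alpha_1,\alpha_2$: $\psi(\alpha_1)=0$ iff $\alpha_1=\lambda$; $\psi(\alpha_1)$ is invariant under permutation of letters; $\psi(\alpha_1)\le\psi(\alpha_1\alpha_2)$; $\psi(\alpha_1\alpha_2)\le\psi(\alpha_1)+\psi(\alpha_2)$. It is bounded if in addition $\psi(\alpha)\ge|\alpha|$ for all $\alpha$. $\psi$ is extended to words $(f_{i_1},\delta_1)\cdots(f_{i_m},\delta_m)$ by $\psi(f_{i_1}\cdots f_{i_m})$ ($\psi(\lambda)=0$). For a $k$-decision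 tree $\Gamma$, $\psi(\Gamma)=\max_\tau\psi(\pi(\tau))$ over complete paths. For $T\ne\Lambda$, $\psi^a(T)$ is the minimum of $\psi(\Gamma)$ over nondeterministic decision trees $\Gamma$ for $T$. $M_\psi(T,\bar\delta)$: let $T\notin\mathcal M_k^{\infty c}$ have columns labeled $f_{t_1},\dots,f_{t_n}$ (in this order). For $\bar\delta=(\delta_1,\dots,\delta_n)\in E_k^n$, $M_\psi(T,\bar\delta)$ is the minimum number $p\in\omega$ for which there exist attributes $f_{t_{i_1}},\dots,f_{t_{i_m}}\in\mathrm{At}(T)$ ($m\ge0$) such that $T(f_{t_{i_1}},\delta_{i_1})\cdots(f_{t_{i_m}},\delta_{i_m})\in\mathcal M_k^{\infty c}$ and $\psi(f_{t_{i_1}}\cdots f_{t_{i_m}})=p$. *)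

theory Defs
  imports Main "HOL-Library.Multiset"
begin

text \<open>Attributes f_i are represented by their indices i :: nat; decisions are nats.
  Words over P are nat lists; words (f,delta) are (nat * nat) lists.\<close>

record dtable =
  cols :: "nat list"
  rows :: "nat list set"
  dec  :: "nat list \<Rightarrow> nat set"

definition is_table :: "nat \<Rightarrow> dtable \<Rightarrow> bool" where
  "is_table k T \<longleftrightarrow> distinct (cols T) \<and> finite (rows T) \<and>
     (\<forall>r\<in>rows T. length r = length (cols T) \<and> (\<forall>v\<in>set r. v < k)) \<and>
     (\<forall>r\<in>rows T. finite (dec T r) \<and> dec T r \<noteq> {})"

definition common_dec :: "dtable \<Rightarrow> nat set" where
  "common_dec T = (\<Inter>r\<in>rows T. dec T r)"

definition in_Mc :: "dtable \<Rightarrow> bool" where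
  "in_Mc T \<longleftrightarrow> rows T = {} \<or> common_dec T \<noteq> {}"

definition sub :: "dtable \<Rightarrow> (nat \<times> nat) list \<Rightarrow> dtable" where
  "sub T \<alpha> = T\<lparr>rows := {r \<in> rows T. \<forall>(f,d)\<in>set \<alpha>. \<forall>i<length (cols T).
       cols T ! i = f \<longrightarrow> r ! i = d}\<rparr>"

text \<open>Subtrees hanging below the (unlabeled) root: a terminal node labeled with a decision,
  or a node labeled with an attribute with labeled outgoing edges.\<close>
datatype dtree = Leaf nat | Node nat "(nat \<times> dtree) list"

inductive wf_sub :: "nat \<Rightarrow> dtree \<Rightarrow> bool" for k where
  "wf_sub k (Leaf d)"
| "es \<noteq> [] \<Longrightarrow> (\<And>\<delta> t. (\<delta>, t) \<in> set es \<Longrightarrow> \<delta> < k \<and> wf_sub k t) \<Longrightarrow> wf_sub k (Node f es)"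

inductive path :: "dtree \<Rightarrow> (nat \<times> nat) list \<Rightarrow> nat \<Rightarrow> bool" where
  "path (Leaf d) [] d"
| "(\<delta>, t) \<in> set es \<Longrightarrow> path t w d \<Longrightarrow> path (Node f es) ((f, \<delta>) # w) d"

inductive attr_in :: "nat \<Rightarrow> dtree \<Rightarrow> bool" where
  "attr_in f (Node f es)"
| "(\<delta>, t) \<in> set es \<Longrightarrow> attr_in g t \<Longrightarrow> attr_in g (Node f es)"

text \<open>A k-decision tree is given by the nonempty list of subtrees below the root.\<close>
definition k_tree :: "nat \<Rightarrow> dtree list \<Rightarrow> bool" where
  "k_tree k \<Gamma> \<longleftrightarrow> \<Gamma> \<noteq> [] \<and> (\<forall>t\<in>set \<Gamma>. wf_sub k t)"

definition attrs :: "dtree list \<Rightarrow> nat set" where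
  "attrs \<Gamma> = {f. \<exists>t\<in>set \<Gamma>. attr_in f t}"

definition cpath :: "dtree list \<Rightarrow> (nat \<times> nat) list \<Rightarrow> nat \<Rightarrow> bool" where
  "cpath \<Gamma> w d \<longleftrightarrow> (\<exists>t\<in>set \<Gamma>. path t w d)"

definition partially_bounded_cm :: "(nat list \<Rightarrow> nat) \<Rightarrow> bool" where
  "partially_bounded_cm \<psi> \<longleftrightarrow>
     (\<forall>a. \<psi> a = 0 \<longleftrightarrow> a = []) \<and>
     (\<forall>a b. mset a = mset b \<longrightarrow> \<psi> a = \<psi> b) \<and>
     (\<forall>a b. \<psi> a \<le> \<psi> (a @ b)) \<and>
     (\<forall>a b. \<psi> (a @ b) \<le> \<psi> a + \<psi> b)"

definition bounded_cm :: "(nat list \<Rightarrow> nat) \<Rightarrow> bool" where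
  "bounded_cm \<psi> \<longleftrightarrow> partially_bounded_cm \<psi> \<and> (\<forall>a. length a \<le> \<psi> a)"

definition psi_word :: "(nat list \<Rightarrow> nat) \<Rightarrow> (nat \<times> nat) list \<Rightarrow> nat" where
  "psi_word \<psi> \<alpha> = \<psi> (map fst \<alpha>)"

definition psi_tree :: "(nat list \<Rightarrow> nat) \<Rightarrow> dtree list \<Rightarrow> nat" where
  "psi_tree \<psi> \<Gamma> = Max {psi_word \<psi> w | w d. cpath \<Gamma> w d}"

definition nd_tree :: "nat \<Rightarrow> dtable \<Rightarrow> dtree list \<Rightarrow> bool" where
  "nd_tree k T \<Gamma> \<longleftrightarrow> k_tree k \<Gamma> \<and> attrs \<Gamma> \<subseteq> set (cols T) \<and>
     (\<forall>r\<in>rows T. \<exists>w d. cpath \<Gamma> w d \<and> r \<in> rows (sub T w)) \<and>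
     (\<forall>w d. cpath \<Gamma> w d \<longrightarrow> rows (sub T w) = {} \<or> d \<in> common_dec (sub T w))"

definition psi_a :: "nat \<Rightarrow> (nat list \<Rightarrow> nat) \<Rightarrow> dtable \<Rightarrow> nat" where
  "psi_a k \<psi> T = (LEAST p. \<exists>\<Gamma>. nd_tree k T \<Gamma> \<and> psi_tree \<psi> \<Gamma> = p)"

text \<open>M_psi(T, delta): chosen columns are given by a list of column positions is.\<close>
definition M_psi :: "(nat list \<Rightarrow> nat) \<Rightarrow> dtable \<Rightarrow> nat list \<Rightarrow> nat" where
  "M_psi \<psi> T \<delta> = (LEAST p. \<exists>is. set is \<subseteq> {..<length (cols T)} \<and>
      in_Mc (sub T (map (\<lambda>i. (cols T ! i, \<delta> ! i)) is)) \<and>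
      \<psi> (map (\<lambda>i. cols T ! i) is) = p)"

end

theory Submission
  imports Defs
begin

lemma finite_paths: "finite {(w,d). path t w d}"
proof (induction t)
  case (Leaf x)
  have "{(w,d). path (Leaf x) w d} = {([],x)}" by (auto elim: path.cases intro: path.intros)
  then show ?case by simp
next
  case (Node f es)
  have "{(w,d). path (Node f es) w d} \<subseteq>
     (\<Union>p\<in>set es. (\<lambda>(w,d). ((f,fst p)#w,d)) ` {(w,d). path (snd p) w d})"
  proof
    fix x assume "x \<in> {(w,d). path (Node f es) w d}"
    then obtain w d where "x = (w,d)" "path (Node f es) w d" by auto
    moreover from this(2) obtain \<delta> t w' where "(\<delta>,t)\<in>set es" "path t w' d" "w = (f,\<delta>)#w'"
      by (cases rule: path.cases) auto
    ultimately show "x \<in> (\<Union>p\<in>set es. (\<lambda>(w,d). ((f,fst p)#w,d)) ` {(w,d). path (snd p) w d})"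
      by (intro UN_I[of "(\<delta>,t)"] rev_image_eqI[of "(w',d)"]) auto
  qed
  moreover have "finite (\<Union>p\<in>set es. (\<lambda>(w,d). ((f,fst p)#w,d)) ` {(w,d). path (snd p) w d})"
    using Node by (auto intro!: finite_UN_I)
  ultimately show ?case by (rule finite_subset)
qed

lemma path_attr: "path t w d \<Longrightarrow> f \<in> fst ` set w \<Longrightarrow> attr_in f t"
  by (induction rule: path.induct) (auto intro: attr_in.intros)

fun chain :: "(nat \<times> nat) list \<Rightarrow> nat \<Rightarrow> dtree" where
  "chain [] d = Leaf d"
| "chain ((f,\<delta>)#w) d = Node f [(\<delta>, chain w d)]"

lemma path_chain: "path (chain w d) w' d' \<longleftrightarrow> w' = w \<and> d' = d"
proof (induction w arbitrary: w')
  case Nil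
  then show ?case by (auto elim: path.cases intro: path.intros)
next
  case (Cons p w)
  obtain f \<delta> where p: "p = (f,\<delta>)" by (cases p)
  show ?case
  proof
    assume "path (chain (p # w) d) w' d'"
    then have "path (Node f [(\<delta>, chain w d)]) w' d'" using p by simp
    then show "w' = p # w \<and> d' = d"
    proof (cases rule: path.cases)
      case 2
      then show ?thesis using Cons.IH p by auto
    qed
  next
    assume "w' = p # w \<and> d' = d"
    then show "path (chain (p # w) d) w' d'" using p Cons.IH[of w]
      by (auto intro: path.intros(2))
  qed
qed

lemma wf_chain: "\<forall>p\<in>set w. snd p < k \<Longrightarrow> wf_sub k (chain w d)"
proof (induction w)
  case Nil
  then show ?case by (auto intro: wf_sub.intros)
next
  case (Cons p w)
  then show ?case by (cases p) (auto intro!: wf_sub.intros(2))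
qed

lemma attr_chain: "attr_in f (chain w d) \<Longrightarrow> f \<in> fst ` set w"
proof (induction w)
  case Nil
  then show ?case by (auto elim: attr_in.cases)
next
  case (Cons p w)
  then show ?case by (cases p) (auto elim: attr_in.cases)
qed

theorem lemma6:
  fixes k :: nat and \<psi> :: "nat list \<Rightarrow> nat" and T :: dtable
  assumes "k \<ge> 2" and "bounded_cm \<psi>" and "is_table k T" and "\<not> in_Mc T"
  shows "psi_a k \<psi> T = Max ((M_psi \<psi> T) ` rows T)"
proof -
  let ?n = "length (cols T)"
  have dist: "distinct (cols T)" and fin: "finite (rows T)"
    and rlen: "\<And>r. r \<in> rows T \<Longrightarrow> length r = ?n"
    and rval: "\<And>r v. r \<in> rows T \<Longrightarrow> v \<in> set r \<Longrightarrow> v < k"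
    using assms(3) unfolding is_table_def by auto
  have ne: "rows T \<noteq> {}" using assms(4) unfolding in_Mc_def by auto
  define W where "W r is = map (\<lambda>i. (cols T ! i, r ! i)) is" for r :: "nat list" and "is"
  define P where "P r is \<longleftrightarrow> set is \<subseteq> {..<?n} \<and> in_Mc (sub T (W r is))" for r "is"
  have Wsub: "r \<in> rows (sub T (W r is))" if "r \<in> rows T" "set is \<subseteq> {..<?n}" for r "is"
  proof -
    have "cols T ! j = cols T ! i \<Longrightarrow> j < ?n \<Longrightarrow> i < ?n \<Longrightarrow> r ! j = r ! i" for i j
      using dist by (simp add: nth_eq_iff_index_eq)
    then show ?thesis using that unfolding sub_def W_def by auto
  qed
  have Mex: "\<exists>is. P r is \<and> \<psi> (map (\<lambda>i. cols T ! i) is) = M_psi \<psi> T r" if "r \<in> rows T" for r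
  proof -
    have "\<exists>is. P r is" 
    proof (intro exI)
      let ?is = "[0..<?n]"
      have "rows (sub T (W r ?is)) = {r}"
      proof
        show "{r} \<subseteq> rows (sub T (W r ?is))" using Wsub[OF that, of "[0..<?n]"] by (simp add: subset_eq)
        show "rows (sub T (W r ?is)) \<subseteq> {r}"
        proof
          fix r' assume "r' \<in> rows (sub T (W r ?is))"
          then have A: "r' \<in> rows T" "\<forall>(f,d)\<in>set (W r ?is). \<forall>i<?n. cols T ! i = f \<longrightarrow> r' ! i = d"
            by (simp_all add: sub_def)
          have "r' ! i = r ! i" if "i < ?n" for i
          proof -
            have "(cols T ! i, r ! i) \<in> set (W r ?is)" using that by (simp add: W_def)
            then show ?thesis using A(2) that by fastforce
          qed
          then have r': "r' \<in> rows T" "\<forall>i<?n. r' ! i = r ! i" using A(1) by auto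
          then show "r' \<in> {r}" using rlen[OF that] rlen[OF r'(1)]
            by (auto intro: nth_equalityI)
        qed
      qed
      moreover have "dec T r \<noteq> {}" using assms(3) that unfolding is_table_def by auto
      ultimately show "P r ?is" unfolding P_def in_Mc_def common_dec_def by (auto simp: sub_def)
    qed
    then obtain is0 where "P r is0" by blast
    define Q where "Q p \<longleftrightarrow> (\<exists>is. P r is \<and> \<psi> (map (\<lambda>i. cols T ! i) is) = p)" for p
    have "\<exists>p. Q p" using \<open>P r is0\<close> unfolding Q_def by blast
    then have "Q (LEAST p. Q p)" by (rule LeastI_ex)
    moreover have "(LEAST p. Q p) = M_psi \<psi> T r"
      unfolding M_psi_def Q_def P_def W_def by (rule arg_cong[where f=Least]) (rule ext, blast)
    ultimately show ?thesis unfolding Q_def by auto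
  qed
  then obtain IS where IS: "\<And>r. r \<in> rows T \<Longrightarrow> P r (IS r) \<and> \<psi> (map (\<lambda>i. cols T ! i) (IS r)) = M_psi \<psi> T r"
    by metis
  have cd: "common_dec (sub T (W r (IS r))) \<noteq> {}" if "r \<in> rows T" for r
    using IS[OF that] Wsub[OF that] unfolding P_def in_Mc_def by auto
  define D where "D r = (SOME d. d \<in> common_dec (sub T (W r (IS r))))" for r
  have D: "D r \<in> common_dec (sub T (W r (IS r)))" if "r \<in> rows T" for r
    using cd[OF that] unfolding D_def by (auto intro: someI)
  define L where "L = (SOME xs. set xs = rows T)"
  have L: "set L = rows T" unfolding L_def using finite_list[OF fin] by (rule someI_ex)
  define \<Gamma> where "\<Gamma> = map (\<lambda>r. chain (W r (IS r)) (D r)) L"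
  have setG: "set \<Gamma> = (\<lambda>r. chain (W r (IS r)) (D r)) ` rows T"
    unfolding \<Gamma>_def using L by simp
  have cpG: "cpath \<Gamma> w d \<longleftrightarrow> (\<exists>r\<in>rows T. w = W r (IS r) \<and> d = D r)" for w d
    unfolding cpath_def setG by (auto simp: path_chain)
  have ndG: "nd_tree k T \<Gamma>"
    unfolding nd_tree_def
  proof (intro conjI allI ballI impI)
    show "k_tree k \<Gamma>" unfolding k_tree_def
    proof (intro conjI ballI)
      show "\<Gamma> \<noteq> []" using setG ne by auto
      fix t assume "t \<in> set \<Gamma>"
      then obtain r where r: "r \<in> rows T" "t = chain (W r (IS r)) (D r)" using setG by auto
      have "\<forall>p\<in>set (W r (IS r)). snd p < k"
        using IS[OF r(1)] rval[OF r(1)] rlen[OF r(1)] unfolding W_def P_def by auto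
      then show "wf_sub k t" using r(2) wf_chain by simp
    qed
    show "attrs \<Gamma> \<subseteq> set (cols T)"
    proof
      fix f assume "f \<in> attrs \<Gamma>"
      then obtain r where r: "r \<in> rows T" "attr_in f (chain (W r (IS r)) (D r))"
        unfolding attrs_def setG by auto
      have "f \<in> fst ` set (W r (IS r))" by (rule attr_chain[OF r(2)])
      then show "f \<in> set (cols T)" using IS[OF r(1)] unfolding W_def P_def by auto
    qed
    fix r assume "r \<in> rows T"
    then show "\<exists>w d. cpath \<Gamma> w d \<and> r \<in> rows (sub T w)"
      using cpG Wsub IS unfolding P_def by blast
  next
    fix w d assume "cpath \<Gamma> w d"
    then show "rows (sub T w) = {} \<or> d \<in> common_dec (sub T w)"
      using cpG D by auto
  qed
  have "{psi_word \<psi> w |w d. cpath \<Gamma> w d} = M_psi \<psi> T ` rows T"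
    unfolding cpG psi_word_def using IS by (force simp: W_def comp_def)
  then have psiG: "psi_tree \<psi> \<Gamma> = Max (M_psi \<psi> T ` rows T)" unfolding psi_tree_def by simp
  have ex: "\<exists>p \<Gamma>. nd_tree k T \<Gamma> \<and> psi_tree \<psi> \<Gamma> = p" using ndG by blast
  have "\<exists>\<Gamma>. nd_tree k T \<Gamma> \<and> psi_tree \<psi> \<Gamma> = psi_a k \<psi> T"
    unfolding psi_a_def by (rule LeastI_ex[OF ex])
  then obtain \<Gamma>0 where G0: "nd_tree k T \<Gamma>0" "psi_tree \<psi> \<Gamma>0 = psi_a k \<psi> T" by blast
  have le1: "psi_a k \<psi> T \<le> Max (M_psi \<psi> T ` rows T)"
    unfolding psi_a_def using ndG psiG by (metis (mono_tags, lifting) Least_le)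
  have finG0: "finite {psi_word \<psi> w |w d. cpath \<Gamma>0 w d}"
  proof -
    have "{psi_word \<psi> w |w d. cpath \<Gamma>0 w d} \<subseteq>
       (\<lambda>(w,d). psi_word \<psi> w) ` (\<Union>t\<in>set \<Gamma>0. {(w,d). path t w d})"
      unfolding cpath_def by auto
    moreover have "finite (\<Union>t\<in>set \<Gamma>0. {(w,d). path t w d})" using finite_paths by auto
    ultimately show ?thesis by (meson finite_imageI finite_subset)
  qed
  define ix where "ix f = (SOME i. i < ?n \<and> cols T ! i = f)" for f
  have ix: "ix f < ?n \<and> cols T ! ix f = f" if "f \<in> set (cols T)" for f
    using that unfolding ix_def by (rule someI_ex[OF iffD1[OF in_set_conv_nth]])
  have le2: "M_psi \<psi> T r \<le> psi_a k \<psi> T" if r: "r \<in> rows T" for r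
  proof -
    obtain w d where wd: "cpath \<Gamma>0 w d" "r \<in> rows (sub T w)"
      using G0(1) r unfolding nd_tree_def by blast
    have fs: "fst ` set w \<subseteq> set (cols T)"
      using wd(1) G0(1) path_attr unfolding cpath_def nd_tree_def attrs_def by blast
    let ?is = "map (\<lambda>p. ix (fst p)) w"
    have m1: "map (\<lambda>i. cols T ! i) ?is = map fst w" using fs ix by (auto intro: map_cong)
    have m2: "W r ?is = w"
    proof -
      have "(cols T ! ix (fst p), r ! ix (fst p)) = p" if "p \<in> set w" for p
      proof -
        have "fst p \<in> set (cols T)" using fs that by auto
        with ix have "ix (fst p) < ?n" "cols T ! ix (fst p) = fst p" by auto
        moreover then have "r ! ix (fst p) = snd p" using wd(2) that unfolding sub_def by fastforce
        ultimately show ?thesis by simp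
      qed
      then show ?thesis unfolding W_def by (induction w) auto
    qed
    have "set ?is \<subseteq> {..<?n}" using fs ix by auto
    moreover have "in_Mc (sub T (W r ?is))"
    proof -
      have "rows (sub T w) = {} \<or> d \<in> common_dec (sub T w)"
        using wd(1) G0(1) unfolding nd_tree_def by blast
      then have "d \<in> common_dec (sub T w)" using wd(2) by blast
      then show ?thesis using m2 unfolding in_Mc_def by auto
    qed
    ultimately have "M_psi \<psi> T r \<le> \<psi> (map (\<lambda>i. cols T ! i) ?is)"
      unfolding M_psi_def W_def by (intro Least_le) blast
    also have "\<dots> = psi_word \<psi> w" unfolding psi_word_def m1 ..
    also have "\<dots> \<le> psi_tree \<psi> \<Gamma>0" unfolding psi_tree_def
      using finG0 wd(1) by (intro Max_ge) auto
    finally show ?thesis using G0(2) by simp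
  qed
  have "Max (M_psi \<psi> T ` rows T) \<le> psi_a k \<psi> T" using fin ne le2 by auto
  with le1 show ?thesis by simp
qed

end
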